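(* Let $m\ge3$ be odd and let $s=s(m)$. For every integer $n\ge1$ and every $x_0\in 2^n+2^{n+1}\mathbb{Z}_2$ (i.e. $v_2(x_0)=n$), one has $v_2\big(T_m(x_0)-x_0\big)=n+s$.
   Context: $v_2$ is the $2$-adic valuation on $\mathbb{Z}_2$. For an integer $m\ge0$, the $m$-th Chebyshev polynomial is $$T_m(x)=\sum_{k=0}^{\lfloor m/2\rfloor}(-1)^k\frac{m}{m-k}\binom{m-k}{k}2^{m-2k-1}x^{m-2k}.$$ For odd $m\ge3$, $s(m)=\max\{n\ge2:\ 2^n\mid(m+1)\text{ or }2^n\mid(m-1)\}$. *)

theory Defs
  imports Complex_Main
begin

text \<open>2-adic integers, modelled as coherent sequences of residues:
  x k is the residue of x modulo 2^k, in [0, 2^k).\<close>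
definition Z2 :: "(nat \<Rightarrow> int) set" where
  "Z2 = {x. \<forall>k. 0 \<le> x k \<and> x k < 2 ^ k \<and> x (Suc k) mod 2 ^ k = x k}"

definition v2_eq :: "(nat \<Rightarrow> int) \<Rightarrow> nat \<Rightarrow> bool" where
  "v2_eq y n \<longleftrightarrow> y n = 0 \<and> y (Suc n) \<noteq> 0"

text \<open>Chebyshev polynomial T_m, by the explicit formula (used for odd m).\<close>
definition chebT :: "nat \<Rightarrow> real \<Rightarrow> real" where
  "chebT m x = (\<Sum>k\<le>m div 2. (-1) ^ k * (real m / real (m - k)) * real ((m - k) choose k)
                  * (2 powi (int m - 2 * int k - 1)) * x ^ (m - 2 * k))"

text \<open>The 2-adic integer T_m(x) - x, computed residue-wise (T_m has integer
  coefficients, so T_m(x) mod 2^k depends only on x mod 2^k).\<close>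
definition Z2_chebT_sub :: "nat \<Rightarrow> (nat \<Rightarrow> int) \<Rightarrow> (nat \<Rightarrow> int)" where
  "Z2_chebT_sub m x = (\<lambda>k. (\<lfloor>chebT m (of_int (x k))\<rfloor> - x k) mod 2 ^ k)"

definition s_val :: "nat \<Rightarrow> nat" where
  "s_val m = (GREATEST n. n \<ge> 2 \<and> ((2::nat) ^ n dvd m + 1 \<or> (2::nat) ^ n dvd m - 1))"

end

theory Submission
  imports Defs
begin


fun ChT :: "int \<Rightarrow> nat \<Rightarrow> int" where
  "ChT a 0 = 1" | "ChT a (Suc 0) = a" | "ChT a (Suc (Suc n)) = 2*a*ChT a (Suc n) - ChT a n"

fun ChL :: "int \<Rightarrow> nat \<Rightarrow> int" where
  "ChL a 0 = 0" | "ChL a (Suc 0) = 1" | "ChL a (Suc (Suc n)) = 2*a*ChL a (Suc n) - ChL a n"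

lemma ch_step: "ChT a (Suc k) = a*ChT a k + (a^2-1)*ChL a k \<and> ChL a (Suc k) = a*ChL a k + ChT a k"
proof (induction k)
  case 0 then show ?case by simp
next
  case (Suc k)
  show ?case
  proof (cases k)
    case 0 then show ?thesis by (simp add: power2_eq_square algebra_simps)
  next
    case (Suc j)
    have i1: "ChT a (Suc (Suc j)) = a*ChT a (Suc j) + (a^2-1)*ChL a (Suc j)"
      and i2: "ChL a (Suc (Suc j)) = a*ChL a (Suc j) + ChT a (Suc j)"
      using Suc.IH Suc by auto
    have r1: "ChT a (Suc (Suc (Suc j))) = 2*a*ChT a (Suc (Suc j)) - ChT a (Suc j)"
      and r2: "ChL a (Suc (Suc (Suc j))) = 2*a*ChL a (Suc (Suc j)) - ChL a (Suc j)" by simp_all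
    have "ChT a (Suc (Suc (Suc j))) = a*ChT a (Suc (Suc j)) + (a^2-1)*ChL a (Suc (Suc j))"
      unfolding r1 i2 using i1 by algebra
    moreover have "ChL a (Suc (Suc (Suc j))) = a*ChL a (Suc (Suc j)) + ChT a (Suc (Suc j))"
      unfolding r2 i1 using i2 by algebra
    ultimately show ?thesis using Suc by simp
  qed
qed

lemma ch_pell: "(ChT a k)^2 - (a^2-1)*(ChL a k)^2 = 1"
proof (induction k)
  case 0 then show ?case by simp
next
  case (Suc k)
  have "(ChT a (Suc k))^2 - (a^2-1)*(ChL a (Suc k))^2 = (ChT a k)^2 - (a^2-1)*(ChL a k)^2"
    unfolding ch_step[THEN conjunct1] ch_step[THEN conjunct2] by algebra
  then show ?case using Suc.IH by simp
qed

lemma ch_add: "ChL a (m+n) = ChL a m * ChT a n + ChT a m * ChL a n \<and>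
   ChT a (m+n) = ChT a m*ChT a n + (a^2-1)*ChL a m*ChL a n"
proof (induction n)
  case 0 then show ?case by simp
next
  case (Suc n)
  have e: "m + Suc n = Suc (m+n)" by simp
  have s1: "ChT a (Suc (m+n)) = a*ChT a (m+n) + (a^2-1)*ChL a (m+n)"
    "ChL a (Suc (m+n)) = a*ChL a (m+n) + ChT a (m+n)" using ch_step by blast+
  have s2: "ChT a (Suc n) = a*ChT a n + (a^2-1)*ChL a n"
    "ChL a (Suc n) = a*ChL a n + ChT a n" using ch_step by blast+
  have i: "ChL a (m+n) = ChL a m * ChT a n + ChT a m * ChL a n"
    "ChT a (m+n) = ChT a m*ChT a n + (a^2-1)*ChL a m*ChL a n" using Suc.IH by auto
  show ?case unfolding e s1 s2 i by (intro conjI; algebra)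
qed

lemma ch_double: "ChL a (2*k) = 2*ChL a k*ChT a k"
proof -
  have "ChL a (k+k) = ChL a k * ChT a k + ChT a k * ChL a k" using ch_add by blast
  moreover have "2*k = k+k" by simp
  moreover have "ChL a k * ChT a k + ChT a k * ChL a k = 2*ChL a k*ChT a k" by (simp add: algebra_simps)
  ultimately show ?thesis by (simp only:)
qed

lemma ch_odd: "ChT a (2*q+1) - a = 2*(a^2-1)*ChL a (q+1)*ChL a q"
proof -
  have h1: "ChT a (2*q+1) = ChT a (q+1)*ChT a q + (a^2-1)*ChL a (q+1)*ChL a q"
  proof -
    have "2*q+1 = (q+1)+q" by simp
    then show ?thesis using ch_add[of a "q+1" q] by (simp only:)
  qed
  have h2: "ChT a (q+1) = a*ChT a q + (a^2-1)*ChL a q" "ChL a (q+1) = a*ChL a q + ChT a q"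
    using ch_step[of a q] by auto
  have h3: "(ChT a q)^2 - (a^2-1)*(ChL a q)^2 = 1" by (rule ch_pell)
  have "ChT a (q+1)*ChT a q - (a^2-1)*ChL a (q+1)*ChL a q = a * ((ChT a q)^2 - (a^2-1)*(ChL a q)^2)"
    unfolding h2 by algebra
  then have "ChT a (q+1)*ChT a q - (a^2-1)*ChL a (q+1)*ChL a q = a" using h3 by simp
  then show ?thesis using h1 by linarith
qed

lemma ch_TL: "2*ChT a (Suc n) = ChL a (Suc (Suc n)) - ChL a n"
proof -
  have "ChL a (Suc (Suc n)) = a*ChL a (Suc n) + ChT a (Suc n)" using ch_step by blast
  moreover have "ChL a (Suc n) = a*ChL a n + ChT a n" using ch_step by blast
  moreover have "ChT a (Suc n) = a*ChT a n + (a^2-1)*ChL a n" using ch_step by blast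
  ultimately show ?thesis by (simp add: algebra_simps power2_eq_square)
qed



definition gg :: "int \<Rightarrow> nat \<Rightarrow> nat \<Rightarrow> int" where
  "gg a n k = (-1)^k * int ((n-k) choose k) * (2*a)^(n-2*k)"

definition Ufull :: "int \<Rightarrow> nat \<Rightarrow> int" where
  "Ufull a n = (\<Sum>k\<le>n. gg a n k)"

lemma gg_zero: "n < 2*k \<Longrightarrow> gg a n k = 0"
  unfolding gg_def by simp

lemma gg_rec: "gg a (Suc (Suc n)) (Suc k) = 2*a * gg a (Suc n) (Suc k) - gg a n k"
proof (cases "2*k+1 \<le> n")
  case True
  then obtain d where d: "n = 2*k+1+d" using le_Suc_ex by blast
  have b: "((k+d+2) choose (k+1)) = ((k+d+1) choose k) + ((k+d+1) choose (k+1))"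
    by (simp add: add.commute)
  have e1: "Suc (Suc n) - Suc k = k+d+2" "Suc n - Suc k = k+d+1" "n - k = k+d+1"
    "Suc (Suc n) - 2 * Suc k = Suc d" "Suc n - 2*Suc k = d" "n - 2*k = Suc d" using d by auto
  show ?thesis unfolding gg_def e1 b by (simp add: algebra_simps)
next
  case False
  show ?thesis
  proof (cases "n = 2*k")
    case True
    then show ?thesis unfolding gg_def by simp
  next
    case False2: False
    then have h: "n < 2*k" using False by simp
    have "Suc n - k < Suc k" "n - k < Suc k" "n - k < k" using h by auto
    then have "(Suc n - k choose Suc k) = 0" "(n - k choose Suc k) = 0" "(n - k choose k) = 0"
      using binomial_eq_0 by blast+
    then show ?thesis unfolding gg_def by (simp del: binomial_eq_0_iff)
  qed
qed

lemma sum_extend: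
  assumes "(m::nat) \<le> N" "\<forall>k. m < k \<longrightarrow> f k = (0::int)"
  shows "(\<Sum>k\<le>N. f k) = (\<Sum>k\<le>m. f k)"
proof (rule sum.mono_neutral_right)
  show "\<forall>i\<in>{..N} - {..m}. f i = 0" using assms(2) by (auto simp: not_le)
qed (use assms in auto)

lemma Ufull_rec: "Ufull a (Suc (Suc n)) = 2*a*Ufull a (Suc n) - Ufull a n"
proof -
  have "Ufull a (Suc (Suc n)) = gg a (Suc (Suc n)) 0 + (\<Sum>k\<le>Suc n. gg a (Suc (Suc n)) (Suc k))"
    unfolding Ufull_def by (rule sum.atMost_Suc_shift)
  also have "\<dots> = 2*a*(gg a (Suc n) 0 + (\<Sum>k\<le>Suc n. gg a (Suc n) (Suc k))) - (\<Sum>k\<le>Suc n. gg a n k)"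
    unfolding gg_rec by (simp add: gg_def sum_subtractf sum_distrib_left algebra_simps)
  also have "gg a (Suc n) 0 + (\<Sum>k\<le>Suc n. gg a (Suc n) (Suc k)) = (\<Sum>k\<le>Suc (Suc n). gg a (Suc n) k)"
    by (rule sum.atMost_Suc_shift[symmetric])
  also have "\<dots> = Ufull a (Suc n)" unfolding Ufull_def
    by (intro sum_extend) (auto intro: gg_zero)
  also have "(\<Sum>k\<le>Suc n. gg a n k) = Ufull a n" unfolding Ufull_def
    by (intro sum_extend) (auto intro: gg_zero)
  finally show ?thesis .
qed

lemma Ufull_L: "Ufull a n = ChL a (Suc n)"
proof (induction n rule: less_induct)
  case (less n)
  show ?case
  proof (cases n)
    case 0 then show ?thesis by (simp add: Ufull_def gg_def)
  next
    case (Suc j)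
    show ?thesis
    proof (cases j)
      case 0 then show ?thesis using Suc by (simp add: Ufull_def gg_def)
    next
      case (Suc i)
      then show ?thesis using \<open>n = Suc j\<close> less.IH[of i] less.IH[of j] Ufull_rec[of a i] by simp
    qed
  qed
qed

lemma Ufull_trunc: "n div 2 \<le> N \<Longrightarrow> (\<Sum>k\<le>N. gg a n k) = Ufull a n"
proof -
  assume h: "n div 2 \<le> N"
  have "(\<Sum>k\<le>N. gg a n k) = (\<Sum>k\<le>n div 2. gg a n k)" using h by (intro sum_extend) (auto intro: gg_zero)
  also have "\<dots> = Ufull a n" unfolding Ufull_def by (intro sum_extend[symmetric]) (auto intro: gg_zero)
  finally show ?thesis .
qed



definition tt :: "int \<Rightarrow> nat \<Rightarrow> nat \<Rightarrow> int" where
  "tt a m k = (-1)^k * int (((m-k) choose k) + (if k=0 then 0 else (m-k-1) choose (k-1)))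
     * 2^(m-2*k-1) * a^(m-2*k)"

definition hh :: "int \<Rightarrow> nat \<Rightarrow> nat \<Rightarrow> int" where
  "hh a m k = (if k=0 then 0 else (-1)^k * int ((m-k-1) choose (k-1)) * (2*a)^(m-2*k))"

lemma gen_div: "(A::real) \<noteq> 0 \<Longrightarrow> (A+B)/A*C = (A*C+B*C)/A"
  by (simp add: field_simps)

lemma coef_aux:
  assumes "Suc j < Suc p"
  shows "real (Suc p + Suc j) / real (Suc p) * real (Suc p choose Suc j)
     = real ((Suc p choose Suc j) + (p choose j))"
proof -
  have i: "Suc j * (Suc p choose Suc j) = Suc p * (p choose j)" by (rule Suc_times_binomial)
  have i2: "real (Suc j) * real (Suc p choose Suc j) = real (Suc p) * real (p choose j)"
    using arg_cong[OF i, of real] by (simp only: of_nat_mult)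
  have pos: "real (Suc p) \<noteq> 0" by simp
  have "real (Suc p + Suc j) / real (Suc p) * real (Suc p choose Suc j)
      = (real (Suc p) * real (Suc p choose Suc j) + real (Suc j) * real (Suc p choose Suc j)) / real (Suc p)"
    unfolding of_nat_add[of "Suc p" "Suc j"] by (rule gen_div[OF pos])
  also have "\<dots> = real (Suc p choose Suc j) + real (p choose j)"
    unfolding i2 using pos by (simp add: add_divide_distrib)
  finally show ?thesis by (simp only: of_nat_add)
qed

lemma coef_real:
  assumes "2*k < m"
  shows "real m / real (m-k) * real ((m-k) choose k)
     = real (((m-k) choose k) + (if k=0 then 0 else (m-k-1) choose (k-1)))"
proof (cases k)
  case 0 then show ?thesis using assms by simp
next
  case (Suc j)
  have "0 < m - k" using assms by simp
  then obtain p where p: "m - k = Suc p" using gr0_implies_Suc by blast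
  have m: "m = Suc p + Suc j" using p Suc assms by simp
  have "Suc j < Suc p" using assms Suc p by simp
  from coef_aux[OF this] show ?thesis using p Suc m by simp
qed

lemma term_real:
  assumes "2*k < m"
  shows "(-1) ^ k * (real m / real (m - k)) * real ((m - k) choose k)
                  * (2 powi (int m - 2 * int k - 1)) * (real_of_int a) ^ (m - 2 * k) = real_of_int (tt a m k)"
proof -
  have e: "int m - 2 * int k - 1 = int (m-2*k-1)" using assms by simp
  have p: "(2::real) powi (int m - 2 * int k - 1) = 2^(m-2*k-1)" unfolding e by (rule power_int_of_nat)
  have "(-1) ^ k * (real m / real (m - k)) * real ((m - k) choose k)
                  * (2 powi (int m - 2 * int k - 1)) * (real_of_int a) ^ (m - 2 * k)
     = (-1) ^ k * (real m / real (m - k) * real ((m - k) choose k))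
                  * 2^(m-2*k-1) * (real_of_int a) ^ (m - 2 * k)" unfolding p by (simp only: mult.assoc)
  also have "\<dots> = (-1) ^ k * real (((m-k) choose k) + (if k=0 then 0 else (m-k-1) choose (k-1)))
                  * 2^(m-2*k-1) * (real_of_int a) ^ (m - 2 * k)" unfolding coef_real[OF assms] ..
  also have "\<dots> = real_of_int (tt a m k)" unfolding tt_def by simp
  finally show ?thesis .
qed

lemma tt_double: "2*k < m \<Longrightarrow> 2 * tt a m k = gg a m k + hh a m k"
proof -
  assume h: "2*k < m"
  have pw: "(2::int) * 2^(m-2*k-1) = 2^(m-2*k)" using h
    by (metis Suc_diff_Suc diff_Suc_1 diff_is_0_eq' le_eq_less_or_eq less_imp_Suc_add not_less_eq power_Suc zero_less_diff)
  have "2 * tt a m k = (-1)^k * int (((m-k) choose k) + (if k=0 then 0 else (m-k-1) choose (k-1)))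
     * (2 * 2^(m-2*k-1)) * a^(m-2*k)" unfolding tt_def by (simp only: mult_ac)
  also have "\<dots> = (-1)^k * int (((m-k) choose k) + (if k=0 then 0 else (m-k-1) choose (k-1)))
     * (2*a)^(m-2*k)" unfolding pw power_mult_distrib by (simp only: mult_ac)
  also have "\<dots> = gg a m k + hh a m k" unfolding gg_def hh_def
    by (cases "k=0") (simp_all add: of_nat_add distrib_left distrib_right)
  finally show ?thesis .
qed

lemma chebT_int:
  assumes "m = 2*r+3"
  shows "chebT m (real_of_int a) = real_of_int (ChT a m)"
proof -
  have d: "m div 2 = Suc r" using assms by simp
  have "chebT m (real_of_int a) = (\<Sum>k\<le>Suc r. real_of_int (tt a m k))"
    unfolding chebT_def d by (intro sum.cong refl term_real) (use assms in auto)
  also have "\<dots> = real_of_int (\<Sum>k\<le>Suc r. tt a m k)" by simp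
  finally have c: "chebT m (real_of_int a) = real_of_int (\<Sum>k\<le>Suc r. tt a m k)" .
  have "2 * (\<Sum>k\<le>Suc r. tt a m k) = (\<Sum>k\<le>Suc r. gg a m k) + (\<Sum>k\<le>Suc r. hh a m k)"
    unfolding sum_distrib_left sum.distrib[symmetric] by (rule sum.cong) (use assms tt_double in auto)
  also have "(\<Sum>k\<le>Suc r. gg a m k) = Ufull a m" using d by (intro Ufull_trunc) simp
  also have "(\<Sum>k\<le>Suc r. hh a m k) = hh a m 0 + (\<Sum>k\<le>r. hh a m (Suc k))" by (rule sum.atMost_Suc_shift)
  also have "\<dots> = - (\<Sum>k\<le>r. gg a (2*r+1) k)"
    unfolding sum_negf[symmetric] by (simp add: hh_def gg_def assms)
  also have "(\<Sum>k\<le>r. gg a (2*r+1) k) = Ufull a (2*r+1)" by (intro Ufull_trunc) simp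
  finally have "2 * (\<Sum>k\<le>Suc r. tt a m k) = Ufull a m - Ufull a (2*r+1)" by simp
  also have "\<dots> = 2 * ChT a m"
  proof -
    have mm: "m = Suc (Suc (2*r+1))" using assms by simp
    show ?thesis unfolding Ufull_L mm by (rule ch_TL[symmetric])
  qed
  finally have "(\<Sum>k\<le>Suc r. tt a m k) = ChT a m" by simp
  then show ?thesis using c by simp
qed


lemma T_even: "even a \<Longrightarrow> odd (ChT a (2*j))"
proof (induction j)
  case 0 then show ?case by simp
next
  case (Suc j)
  have "ChT a (2*Suc j) = 2*a*ChT a (2*j+1) - ChT a (2*j)"
    by (simp add: numeral_2_eq_2)
  then show ?case using Suc by simp
qed

lemma L_odd: "odd (ChL a (2*j+1))"
proof (induction j)
  case 0 then show ?case by simp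
next
  case (Suc j)
  have "ChL a (2*Suc j+1) = 2*a*ChL a (2*j+2) - ChL a (2*j+1)"
    by (simp add: numeral_2_eq_2)
  then show ?case using Suc by simp
qed

lemma T_odd: "\<exists>t. ChT a (2*j+1) = a*(2*t+1)"
proof (induction j)
  case 0 then show ?case by (rule exI[of _ 0]) simp
next
  case (Suc j)
  then obtain t where t: "ChT a (2*j+1) = a*(2*t+1)" by blast
  have "ChT a (2*Suc j+1) = 2*a*ChT a (2*j+2) - ChT a (2*j+1)"
    by (simp add: numeral_2_eq_2)
  also have "\<dots> = a*(2*(ChT a (2*j+2) - t - 1)+1)" using t by (simp add: algebra_simps)
  finally show ?case by blast
qed

lemma L_pow:
  assumes w: "odd w" and oo: "odd (oo::nat)" and n: "n \<ge> 1"
  shows "\<exists>u. odd u \<and> ChL (2^n*w) (2^(Suc e)*oo) = 2^(n+Suc e)*u"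
proof (induction e)
  case 0
  obtain j where j: "oo = 2*j+1" using oo oddE by blast
  obtain t where t: "ChT (2^n*w) oo = (2^n*w)*(2*t+1)" using T_odd j by blast
  have "ChL (2^n*w) (2^(Suc 0)*oo) = 2*ChL (2^n*w) oo*ChT (2^n*w) oo" using ch_double by simp
  also have "\<dots> = 2^(n+Suc 0)*(ChL (2^n*w) oo * w * (2*t+1))" unfolding t by (simp add: algebra_simps)
  finally show ?case using L_odd[of "2^n*w" j] j w by fastforce
next
  case (Suc e)
  then obtain u where u: "odd u" "ChL (2^n*w) (2^(Suc e)*oo) = 2^(n+Suc e)*u" by blast
  have ev: "even ((2::int)^n*w)" using n by (simp add: dvd_power)
  have e2: "(2::nat)^(Suc (Suc e))*oo = 2*(2^(Suc e)*oo)" by simp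
  have e3: "(2::nat)^(Suc e)*oo = 2*(2^e*oo)" by simp
  have od: "odd (ChT (2^n*w) (2^(Suc e)*oo))" unfolding e3 by (rule T_even[OF ev])
  have "ChL (2^n*w) (2^(Suc (Suc e))*oo) = 2*ChL (2^n*w) (2^(Suc e)*oo)*ChT (2^n*w) (2^(Suc e)*oo)"
    unfolding e2 by (rule ch_double)
  also have "\<dots> = 2^(n+Suc (Suc e))*(u*ChT (2^n*w) (2^(Suc e)*oo))" unfolding u(2) by (simp add: algebra_simps)
  finally show ?case using u(1) od by auto
qed




lemma fact2: "0 < (k::nat) \<Longrightarrow> \<exists>e oo. k = 2^e*oo \<and> odd oo"
proof (induction k rule: less_induct)
  case (less k)
  show ?case
  proof (cases "even k")
    case True
    then obtain h where h: "k = 2*h" by blast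
    then have "0 < h" "h < k" using less.prems by auto
    then obtain e oo where "h = 2^e*oo" "odd oo" using less.IH by blast
    then show ?thesis using h by (metis mult.assoc power_Suc)
  next
    case False
    then show ?thesis by (metis mult_1 power_0)
  qed
qed

lemma pow_dvd_bound: "odd (oo::nat) \<Longrightarrow> 2^y dvd 2^e*oo \<Longrightarrow> y \<le> e"
proof (rule ccontr)
  assume oo: "odd oo" and d: "2^y dvd 2^e*oo" and "\<not> y \<le> e"
  then have "Suc e \<le> y" by simp
  then have "(2::nat)^(Suc e) dvd 2^y" by (rule le_imp_power_dvd)
  then have "2^e*2 dvd 2^e*oo" using d by (metis dvd_trans power_Suc2)
  then have "2 dvd oo" by (simp add: nat_mult_dvd_cancel_disj)
  then show False using oo by simp
qed

lemma sval:
  assumes oo: "odd oo" and u: "odd u"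
    and h: "(m - 1 = 2^(Suc e)*oo \<and> m + 1 = 2*u) \<or> (m + 1 = 2^(Suc e)*oo \<and> m - 1 = 2*u)"
    and e: "e \<ge> 1"
  shows "s_val m = Suc e"
  unfolding s_val_def
proof (rule Greatest_equality)
  show "Suc e \<ge> 2 \<and> ((2::nat) ^ Suc e dvd m + 1 \<or> (2::nat) ^ Suc e dvd m - 1)" using h e by auto
next
  fix y assume y: "y \<ge> 2 \<and> ((2::nat) ^ y dvd m + 1 \<or> (2::nat) ^ y dvd m - 1)"
  have no: "\<not> (2::nat)^y dvd 2*u"
  proof
    assume "(2::nat)^y dvd 2*u"
    then have "y \<le> 1" using pow_dvd_bound[OF u, of y 1] by simp
    then show False using y by simp
  qed
  show "y \<le> Suc e" using h y no pow_dvd_bound[OF oo, of y "Suc e"] by auto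
qed

lemma main_int:
  assumes w: "odd w" and n: "n \<ge> 1" and m: "m \<ge> 3" "odd m"
  shows "s_val m \<ge> 2 \<and> (\<exists>u. odd u \<and> ChT (2^n*w) m - 2^n*w = 2^(n + s_val m)*u)"
proof -
  define a where "a = (2::int)^n*w"
  obtain q where q: "m = 2*q+1" using m(2) oddE by blast
  have q1: "q \<ge> 1" using q m by simp
  have ev: "even a" using n unfolding a_def by (simp add: dvd_power)
  have oa: "odd (a^2-1)" using ev by simp
  have key: "ChT a m - a = 2*(a^2-1)*ChL a (q+1)*ChL a q" unfolding q by (rule ch_odd)
  show ?thesis
  proof (cases "even q")
    case True
    obtain e oo where eo: "q = 2^e*oo" "odd oo" using fact2 q1 by (metis less_le_trans zero_less_one)
    have "e \<noteq> 0" using eo True by auto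
    then obtain e' where e': "e = Suc e'" using not0_implies_Suc by blast
    obtain u where u: "odd u" "ChL a q = 2^(n+Suc e')*u" using L_pow[OF w eo(2) n, of e'] eo e' a_def by blast
    have "q + 1 = 2*(q div 2)+1" using True by simp
    then have oL: "odd (ChL a (q+1))" using L_odd by metis
    have e1: "e \<ge> 1" using e' by simp
    have s: "s_val m = Suc e"
    proof (rule sval[OF eo(2), of "q+1"])
      show "odd (q+1)" using True by simp
      show "e \<ge> 1" by (rule e1)
      show "(m - 1 = 2^(Suc e)*oo \<and> m + 1 = 2*(q+1)) \<or> (m + 1 = 2^(Suc e)*oo \<and> m - 1 = 2*(q+1))"
        using q eo by simp
    qed
    have "ChT a m - a = 2^(n + Suc e)*((a^2-1)*ChL a (q+1)*u)"
      unfolding key u(2) e' by (simp add: algebra_simps)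
    then show ?thesis using s oa oL u(1) a_def e1 by auto
  next
    case False
    obtain e oo where eo: "q+1 = 2^e*oo" "odd oo" using fact2 by (metis zero_less_Suc Suc_eq_plus1)
    have "e \<noteq> 0"
    proof
      assume "e = 0" then have "q+1 = oo" using eo by simp
      then have "odd (q+1)" using eo(2) by simp
      then show False using False by simp
    qed
    then obtain e' where e': "e = Suc e'" using not0_implies_Suc by blast
    obtain u where u: "odd u" "ChL a (q+1) = 2^(n+Suc e')*u" using L_pow[OF w eo(2) n, of e'] eo e' a_def by metis
    have "q = 2*(q div 2)+1" using False by simp
    then have oL: "odd (ChL a q)" using L_odd by metis
    have e1: "e \<ge> 1" using e' by simp
    have s: "s_val m = Suc e"
    proof (rule sval[OF eo(2), of "q"])
      show "odd q" using False by simp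
      show "e \<ge> 1" by (rule e1)
      show "(m - 1 = 2^(Suc e)*oo \<and> m + 1 = 2*q) \<or> (m + 1 = 2^(Suc e)*oo \<and> m - 1 = 2*q)"
        using q eo by simp
    qed
    have "ChT a m - a = 2^(n + Suc e)*((a^2-1)*ChL a q*u)"
      unfolding key u(2) e' by (simp add: algebra_simps)
    then show ?thesis using s oa oL u(1) a_def e1 by auto
  qed
qed




lemma zlem:
  assumes x: "x \<in> Z2" and v: "v2_eq x n" and k: "Suc n \<le> k"
  shows "\<exists>w. odd w \<and> x k = 2^n*w"
proof -
  have Z: "\<And>k. 0 \<le> x k \<and> x k < 2 ^ k \<and> x (Suc k) mod 2 ^ k = x k" using x unfolding Z2_def by auto
  have c: "x k mod 2^(Suc n) = x (Suc n)" using k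
  proof (induction k rule: dec_induct)
    case base then show ?case using Z[of "Suc n"] by simp
  next
    case (step k)
    have "(2::int)^(Suc n) dvd 2^k" using step.hyps(1) by (rule le_imp_power_dvd)
    then have "x (Suc k) mod 2^(Suc n) = (x (Suc k) mod 2^k) mod 2^(Suc n)" by (simp add: mod_mod_cancel)
    also have "\<dots> = x (Suc n)" using Z[of k] step.IH by simp
    finally show ?case .
  qed
  have x0: "x n = 0" "x (Suc n) \<noteq> 0" using v unfolding v2_eq_def by auto
  have "x (Suc n) mod 2^n = 0" using Z[of n] x0 by simp
  then obtain c where cc: "x (Suc n) = 2^n * c" by (metis dvd_def mod_eq_0_iff_dvd)
  have "0 \<le> 2^n*c" "2^n*c < 2^n*2" using Z[of "Suc n"] cc by auto
  then have "0 \<le> c" "c < 2" by (simp_all add: zero_le_mult_iff)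
  moreover have "c \<noteq> 0" using cc x0 by auto
  ultimately have "c = 1" by simp
  then have xs: "x (Suc n) = 2^n" using cc by simp
  have "x k = 2^(Suc n) * (x k div 2^(Suc n)) + x k mod 2^(Suc n)" by simp
  also have "\<dots> = 2^n * (2*(x k div 2^(Suc n)) + 1)" unfolding c xs by (simp add: algebra_simps)
  finally show ?thesis by (intro exI[of _ "2*(x k div 2^(Suc n)) + 1"]) simp
qed

theorem mainTheorem5:
  fixes m n :: nat and x :: "nat \<Rightarrow> int"
  assumes "m \<ge> 3" and "odd m" and "n \<ge> 1"
    and "x \<in> Z2" and "v2_eq x n"
  shows "v2_eq (Z2_chebT_sub m x) (n + s_val m)"
proof -
  define r where "r = (m - 3) div 2"
  have r: "m = 2*r+3" using assms(1,2) unfolding r_def by presburger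
  have sge: "s_val m \<ge> 2" using main_int[of 1 n m] assms by simp
  have val: "\<exists>u. odd u \<and> Z2_chebT_sub m x k = (2^(n + s_val m)*u) mod 2^k" if k: "Suc n \<le> k" for k
  proof -
    obtain w where w: "odd w" "x k = 2^n*w" using zlem[OF assms(4,5) k] by blast
    obtain u where u: "odd u" "ChT (2^n*w) m - 2^n*w = 2^(n + s_val m)*u"
      using main_int[OF w(1) assms(3,1,2)] by blast
    have "chebT m (of_int (x k)) = of_int (ChT (x k) m)" by (rule chebT_int[OF r])
    then have "Z2_chebT_sub m x k = (ChT (x k) m - x k) mod 2^k" unfolding Z2_chebT_sub_def by simp
    then show ?thesis using u w by auto
  qed
  obtain u where u: "odd u" "Z2_chebT_sub m x (n + s_val m) = (2^(n + s_val m)*u) mod 2^(n + s_val m)"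
    using val[of "n + s_val m"] sge by auto
  obtain u' where u': "odd u'" "Z2_chebT_sub m x (Suc (n + s_val m)) = (2^(n + s_val m)*u') mod 2^(Suc (n + s_val m))"
    using val[of "Suc (n + s_val m)"] sge by auto
  have "(2^(n + s_val m)*u') mod 2^(Suc (n + s_val m)) \<noteq> (0::int)"
  proof
    assume "(2^(n + s_val m)*u') mod 2^(Suc (n + s_val m)) = (0::int)"
    then have "2^(n + s_val m)*2 dvd 2^(n + s_val m)*u'" by (simp add: mod_eq_0_iff_dvd mult.commute)
    then have "2 dvd u'" by (simp add: dvd_mult_cancel_left)
    then show False using u'(1) by simp
  qed
  then show ?thesis unfolding v2_eq_def using u u' by simp
qed



end
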